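(* Assume (A0). Let $(s,t) \in \Delta_J$ and $f \in Y_1$. Then on $\Omega$, for every $\epsilon\in(0,1]$, \[ V_\epsilon(s,t)f=f+\int_s^t V_\epsilon(s,u)A_{x (u^{1/\epsilon,s})}(u)f\, du+\sum_{k=1}^{N_s (t^{1/\epsilon,s})} V_\epsilon(s,T_k^{\epsilon,s}(s)^-) [D^\epsilon(x_{k-1}(s),x_k(s))-I]f , \] where $V_\epsilon(s,r^-)f=\lim_{u\uparrow r}V_\epsilon(s,u)f$.
   Context: Banach spaces: $(Y,\|\cdot\|)$ real separable, $(Y_1,\|\cdot\|_{Y_1})$ real separable continuously embedded in $Y$. $J$ is $\mathbb{R}^+$ or $[0,T_\infty]$, $\Delta_J=\{(s,t)\in J^2:s\le t\}$, $J(s)=\{t\in J:t\ge s\}$. An inhomogeneous $Y$-semigroup is $\Gamma:\Delta_J\to\mathcal B(Y)$ with $\Gamma(t,t)=I$, $\Gamma(s,r)\Gamma(r,t)=\Gamma(s,t)$; its generator $A_\Gamma(t)f$ is the common value of $\lim_{h\downarrow0}h^{-1}(\Gamma(t,t+h)-I)f$ and $\lim_{h\downarrow0}h^{-1}(\Gamma(t-h,t)-I)f$ on the set $\mathcal D(A_\Gamma(t))$ where both exist and agree, $\mathcal D(A_\Gamma)=\bigcap_t\mathcal D(A_\Gamma(t))$. $\Gamma$ is regular if $Y_1\subseteq\mathcal D(A_\Gamma)$, $\Gamma(s,t)Y_1\subseteq Y_1$ and $u\mapsto\Gamma(u,t)f$ is $\|\cdot\|_{Y_1}$-continuous for $f\in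 Y_1$, $u\mapsto\Gamma(s,u)f$ is $Y$-continuous for $f\in Y$, and $u\mapsto\Gamma(s,u)A_\Gamma(u)f$ is Bochner integrable on $[s,t]$ for $f\in Y_1$. Probabilistic setting: $(\Omega,\mathcal F,\mathbb P)$ complete; $X$ finite; $(x_n,T_n)_{n\ge0}$ a Markov renewal process ($x_n\in X$, $T_0=0<T_1<\dots$) with semi-Markov kernel $Q$; $N(t)=\sup\{n:T_n\le t\}$ (finite everywhere after restricting $\Omega$ to a full-measure event); $x(t)=x_{N(t)}$; $N_s(t)=N(t)-N(s)$, $T_0(s)=s$, $T_n(s)=T_{N(s)+n}$ ($n\ge1$), $x_n(s)=x(T_n(s))$. $(\Gamma_x)_{x\in X}$ are inhomogeneous $Y$-semigroups with generators $A_x$ (jointly measurable in $(r,t,x,f)$). $(D^\epsilon(x,y))_{x,y\in X,\epsilon\in(0,1]}\subseteq\mathcal B(Y)$ with $(x,y,f)\mapsto D^\epsilon(x,y)f$ measurable, and $D^0(x,y):=I$. $\mathcal D(D_1)$ is the set of $f\in Y$ such that for all $\epsilon\in[0,1]$, $x,y$, the derivative $D^\epsilon_1(x,y)f:=\lim_{h\to0,\epsilon+h\in[0,1]}h^{-1}(D^{\epsilon+h}(x,y)f-D^\epsilon(x,y)f)$ exists in $Y$; $\mathcal D(D_2)$, $D^\epsilon_2$ likewise for the second derivative in $\epsilon$. For $f\in\bigcap_x\mathcal D(A_x)$ with $A_x(t)f\in Y_1$ for all $t$, $A'_x(t)f$ denotes the $\|\cdot\|_{Y_1}$-limit of $h^{-1}(A_x(t+h)f-A_x(t)f)$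 and $\mathcal D(A'_x)$ the set where it exists in $Y_1$ for all $t$. (A0) is the following set of assumptions: (a) $Y_1\subseteq\mathcal D(D_1)$; (b) every $\Gamma_x$ is regular; (c) for every $x$ and $f\in Y_1$, $t\mapsto A_x(t)f$ is continuous into $Y$; (d) there is $\bar\tau>0$ with $Q(x,y,(\bar\tau,\infty))=0$ for all $x,y$; (e) all $\Gamma_x(s,t)$ and $D^\epsilon(x,y)$ have $\mathcal B(Y)$-norm at most $1$; (f) $A_x(t)\in\mathcal B(Y_1,Y)$ and $\sup_{u\in J}\|A_x(u)\|_{\mathcal B(Y_1,Y)}<\infty$ for all $x$; (g) $\sup_{u,x}\|A'_x(u)f\|<\infty$ and $\sup_{u,x}\|A_x(u)f\|_{Y_1}<\infty$ for all $f\in\bigcap_x\mathcal D(A'_x)$; (h) $\sup_{\epsilon\in[0,1],x,y}\|D^\epsilon_1(x,y)f\|<\infty$ for $f\in\mathcal D(D_1)$; (i) $\sup_{\epsilon\in[0,1],x,y}\|D^\epsilon_2(x,y)f\|<\infty$ for $f\in\mathcal D(D_2)$. With $t^{\epsilon,s}=s+\epsilon(t-s)$ (so $t^{1/\epsilon,s}=s+(t-s)/\epsilon$) and $T^{\epsilon,s}_k(s)=s+\epsilon(T_k(s)-s)$, $V_\epsilon(s,t)=\big[\prod_{k=1}^{N_s(t^{1/\epsilon,s})}\Gamma_{x_{k-1}(s)}(T^{\epsilon,s}_{k-1}(s),T^{\epsilon,s}_k(s))D^\epsilon(x_{k-1}(s),x_k(s))\big]\Gamma_{x(t^{1/\epsilon,s})}(T^{\epsilon,s}_{N_s(t^{1/\epsilon,s})}(s),t)$,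 product ordered left to right, empty product $I$. *)

theory Defs
  imports "HOL-Probability.Probability"
begin

definition time_set :: "real set \<Rightarrow> bool" where
  "time_set J \<longleftrightarrow> J = {0..} \<or> (\<exists>Tinf>0. J = {0..Tinf})"


definition inh_semigroup :: "real set \<Rightarrow> (real \<Rightarrow> real \<Rightarrow> ('y::real_normed_vector \<Rightarrow>\<^sub>L 'y)) \<Rightarrow> bool" where
  "inh_semigroup J \<Gamma> \<longleftrightarrow> (\<forall>t\<in>J. \<Gamma> t t = id_blinfun) \<and>
     (\<forall>s\<in>J. \<forall>r\<in>J. \<forall>t\<in>J. s \<le> r \<longrightarrow> r \<le> t \<longrightarrow> \<Gamma> s r o\<^sub>L \<Gamma> r t = \<Gamma> s t)"

text \<open>Right and left difference quotients; the increments h are restricted to those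
  for which the time arguments stay in J (at an endpoint of J one of the two filters is trivial,
  so only the meaningful one-sided limit is required there).\<close>

definition gen_lim :: "real set \<Rightarrow> (real \<Rightarrow> real \<Rightarrow> ('y::real_normed_vector \<Rightarrow>\<^sub>L 'y)) \<Rightarrow> real \<Rightarrow> 'y \<Rightarrow> 'y \<Rightarrow> bool" where
  "gen_lim J \<Gamma> t f g \<longleftrightarrow>
     ((\<lambda>h. (1 / h) *\<^sub>R (\<Gamma> t (t + h) f - f)) \<longlongrightarrow> g) (at 0 within {h. 0 < h \<and> t + h \<in> J}) \<and>
     ((\<lambda>h. (1 / h) *\<^sub>R (\<Gamma> (t - h) t f - f)) \<longlongrightarrow> g) (at 0 within {h. 0 < h \<and> t - h \<in> J})"

definition gen_dom :: "real set \<Rightarrow> (real \<Rightarrow> real \<Rightarrow> ('y::real_normed_vector \<Rightarrow>\<^sub>L 'y)) \<Rightarrow> real \<Rightarrow> 'y set" where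
  "gen_dom J \<Gamma> t = {f. \<exists>g. gen_lim J \<Gamma> t f g}"

definition gen :: "real set \<Rightarrow> (real \<Rightarrow> real \<Rightarrow> ('y::real_normed_vector \<Rightarrow>\<^sub>L 'y)) \<Rightarrow> real \<Rightarrow> 'y \<Rightarrow> 'y" where
  "gen J \<Gamma> t f = (THE g. gen_lim J \<Gamma> t f g)"

definition gen_dom_all :: "real set \<Rightarrow> (real \<Rightarrow> real \<Rightarrow> ('y::real_normed_vector \<Rightarrow>\<^sub>L 'y)) \<Rightarrow> 'y set" where
  "gen_dom_all J \<Gamma> = (\<Inter>t\<in>J. gen_dom J \<Gamma> t)"

text \<open>Y1 is modelled as a Banach space 'z together with a continuous linear injective
  embedding iota : Y1 -> Y; "f in Y1" means "f in range iota", and the Y1-norm of such f is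
  norm (inv iota f).\<close>

definition regular :: "real set \<Rightarrow> ('z::real_normed_vector \<Rightarrow>\<^sub>L 'y::{real_normed_vector,second_countable_topology}) \<Rightarrow> (real \<Rightarrow> real \<Rightarrow> ('y \<Rightarrow>\<^sub>L 'y)) \<Rightarrow> bool" where
  "regular J \<iota> \<Gamma> \<longleftrightarrow>
     range \<iota> \<subseteq> gen_dom_all J \<Gamma> \<and>
     (\<forall>s\<in>J. \<forall>t\<in>J. s \<le> t \<longrightarrow> \<Gamma> s t ` range \<iota> \<subseteq> range \<iota>) \<and>
     (\<forall>t\<in>J. \<forall>g. continuous_on {u\<in>J. u \<le> t} (\<lambda>u. inv \<iota> (\<Gamma> u t (\<iota> g)))) \<and>
     (\<forall>s\<in>J. \<forall>f. continuous_on {u\<in>J. s \<le> u} (\<lambda>u. \<Gamma> s u f)) \<and>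
     (\<forall>s\<in>J. \<forall>t\<in>J. s \<le> t \<longrightarrow> (\<forall>g. set_integrable lborel {s..t} (\<lambda>u. \<Gamma> s u (gen J \<Gamma> u (\<iota> g)))))"

definition D1_dom :: "(real \<Rightarrow> 'x \<Rightarrow> 'x \<Rightarrow> ('y::real_normed_vector \<Rightarrow>\<^sub>L 'y)) \<Rightarrow> 'y set" where
  "D1_dom D = {f. \<forall>\<epsilon>\<in>{0..1}. \<forall>x y. \<exists>L.
      ((\<lambda>h. (1 / h) *\<^sub>R (D (\<epsilon> + h) x y f - D \<epsilon> x y f)) \<longlongrightarrow> L) (at 0 within {h. \<epsilon> + h \<in> {0..1}})}"

definition D1 :: "(real \<Rightarrow> 'x \<Rightarrow> 'x \<Rightarrow> ('y::real_normed_vector \<Rightarrow>\<^sub>L 'y)) \<Rightarrow> real \<Rightarrow> 'x \<Rightarrow> 'x \<Rightarrow> 'y \<Rightarrow> 'y" where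
  "D1 D \<epsilon> x y f = Lim (at 0 within {h. \<epsilon> + h \<in> {0..1}}) (\<lambda>h. (1 / h) *\<^sub>R (D (\<epsilon> + h) x y f - D \<epsilon> x y f))"

definition D2_dom :: "(real \<Rightarrow> 'x \<Rightarrow> 'x \<Rightarrow> ('y::real_normed_vector \<Rightarrow>\<^sub>L 'y)) \<Rightarrow> 'y set" where
  "D2_dom D = {f \<in> D1_dom D. \<forall>\<epsilon>\<in>{0..1}. \<forall>x y. \<exists>L.
      ((\<lambda>h. (1 / h) *\<^sub>R (D1 D (\<epsilon> + h) x y f - D1 D \<epsilon> x y f)) \<longlongrightarrow> L) (at 0 within {h. \<epsilon> + h \<in> {0..1}})}"

definition D2 :: "(real \<Rightarrow> 'x \<Rightarrow> 'x \<Rightarrow> ('y::real_normed_vector \<Rightarrow>\<^sub>L 'y)) \<Rightarrow> real \<Rightarrow> 'x \<Rightarrow> 'x \<Rightarrow> 'y \<Rightarrow> 'y" where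
  "D2 D \<epsilon> x y f = Lim (at 0 within {h. \<epsilon> + h \<in> {0..1}}) (\<lambda>h. (1 / h) *\<^sub>R (D1 D (\<epsilon> + h) x y f - D1 D \<epsilon> x y f))"

definition Ader_dom :: "real set \<Rightarrow> ('z::real_normed_vector \<Rightarrow>\<^sub>L 'y::real_normed_vector) \<Rightarrow> ('x \<Rightarrow> real \<Rightarrow> real \<Rightarrow> ('y \<Rightarrow>\<^sub>L 'y)) \<Rightarrow> 'x \<Rightarrow> 'y set" where
  "Ader_dom J \<iota> \<Gamma>s x = {f. (\<forall>y. f \<in> gen_dom_all J (\<Gamma>s y)) \<and>
      (\<forall>t\<in>J. gen J (\<Gamma>s x) t f \<in> range \<iota>) \<and>
      (\<forall>t\<in>J. \<exists>L. ((\<lambda>h. (1 / h) *\<^sub>R (inv \<iota> (gen J (\<Gamma>s x) (t + h) f) - inv \<iota> (gen J (\<Gamma>s x) t f))) \<longlongrightarrow> L)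
                    (at 0 within {h. t + h \<in> J}))}"

definition Ader :: "real set \<Rightarrow> ('z::real_normed_vector \<Rightarrow>\<^sub>L 'y::real_normed_vector) \<Rightarrow> ('x \<Rightarrow> real \<Rightarrow> real \<Rightarrow> ('y \<Rightarrow>\<^sub>L 'y)) \<Rightarrow> 'x \<Rightarrow> real \<Rightarrow> 'y \<Rightarrow> 'z" where
  "Ader J \<iota> \<Gamma>s x t f = Lim (at 0 within {h. t + h \<in> J})
      (\<lambda>h. (1 / h) *\<^sub>R (inv \<iota> (gen J (\<Gamma>s x) (t + h) f) - inv \<iota> (gen J (\<Gamma>s x) t f)))"

definition semi_markov_kernel :: "('x::finite \<Rightarrow> 'x \<Rightarrow> real measure) \<Rightarrow> bool" where
  "semi_markov_kernel Q \<longleftrightarrow>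
     (\<forall>x y. finite_measure (Q x y) \<and> sets (Q x y) = sets borel \<and> emeasure (Q x y) {..0} = 0) \<and>
     (\<forall>x. (\<Sum>y\<in>UNIV. measure (Q x y) (space (Q x y))) = 1)"

text \<open>(x_n, T_n) is a Markov renewal process with semi-Markov kernel Q, expressed through its
  finite-dimensional distributions:
  P(x_0 = y_0, x_k = y_k, T_k - T_(k-1) <= t_k for 1<=k<=n) = P(x_0 = y_0) * prod_k Q(y_(k-1), y_k, [0, t_k]).\<close>
definition markov_renewal :: "'a measure \<Rightarrow> (nat \<Rightarrow> 'a \<Rightarrow> 'x::finite) \<Rightarrow> (nat \<Rightarrow> 'a \<Rightarrow> real) \<Rightarrow> ('x \<Rightarrow> 'x \<Rightarrow> real measure) \<Rightarrow> bool" where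
  "markov_renewal M xs Ts Q \<longleftrightarrow>
     prob_space M \<and> semi_markov_kernel Q \<and>
     (\<forall>n. xs n \<in> measurable M (count_space UNIV) \<and> Ts n \<in> borel_measurable M) \<and>
     (\<forall>\<omega>\<in>space M. Ts 0 \<omega> = 0 \<and> (\<forall>n. Ts n \<omega> < Ts (Suc n) \<omega>)) \<and>
     (\<forall>n (ys :: nat \<Rightarrow> 'x) (ts :: nat \<Rightarrow> real).
        measure M {\<omega>\<in>space M. \<forall>k\<le>n. xs k \<omega> = ys k \<and> (0 < k \<longrightarrow> Ts k \<omega> - Ts (k - 1) \<omega> \<le> ts k)}
        = measure M {\<omega>\<in>space M. xs 0 \<omega> = ys 0} *
          (\<Prod>k\<in>{1..n}. measure (Q (ys (k - 1)) (ys k)) {..ts k}))"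

definition cnt :: "(nat \<Rightarrow> real) \<Rightarrow> real \<Rightarrow> nat" where
  "cnt T t = (GREATEST n. T n \<le> t)"

definition xpath :: "(nat \<Rightarrow> 'x) \<Rightarrow> (nat \<Rightarrow> real) \<Rightarrow> real \<Rightarrow> 'x" where
  "xpath X T t = X (cnt T t)"

definition Ns :: "(nat \<Rightarrow> real) \<Rightarrow> real \<Rightarrow> real \<Rightarrow> nat" where
  "Ns T s t = cnt T t - cnt T s"

definition Tks :: "(nat \<Rightarrow> real) \<Rightarrow> real \<Rightarrow> nat \<Rightarrow> real" where
  "Tks T s k = (if k = 0 then s else T (cnt T s + k))"

definition xks :: "(nat \<Rightarrow> 'x) \<Rightarrow> (nat \<Rightarrow> real) \<Rightarrow> real \<Rightarrow> nat \<Rightarrow> 'x" where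
  "xks X T s k = xpath X T (Tks T s k)"

definition tscale :: "real \<Rightarrow> real \<Rightarrow> real \<Rightarrow> real" where
  "tscale \<epsilon> s t = s + \<epsilon> * (t - s)"

definition Tkse :: "(nat \<Rightarrow> real) \<Rightarrow> real \<Rightarrow> real \<Rightarrow> nat \<Rightarrow> real" where
  "Tkse T \<epsilon> s k = s + \<epsilon> * (Tks T s k - s)"

text \<open>V_epsilon(s,t): ordered product (left to right) of the factors
  Gamma_{x_(k-1)(s)}(T^eps_(k-1), T^eps_k) D^eps(x_(k-1)(s), x_k(s)), k = 1..N_s(t^{1/eps,s}),
  followed by Gamma_{x(t^{1/eps,s})}(T^eps_N, t).\<close>
definition Vop :: "('x \<Rightarrow> real \<Rightarrow> real \<Rightarrow> ('y::real_normed_vector \<Rightarrow>\<^sub>L 'y)) \<Rightarrow> (real \<Rightarrow> 'x \<Rightarrow> 'x \<Rightarrow> ('y \<Rightarrow>\<^sub>L 'y))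
     \<Rightarrow> (nat \<Rightarrow> 'x) \<Rightarrow> (nat \<Rightarrow> real) \<Rightarrow> real \<Rightarrow> real \<Rightarrow> real \<Rightarrow> ('y \<Rightarrow>\<^sub>L 'y)" where
  "Vop \<Gamma>s D X T \<epsilon> s t =
     (let n = Ns T s (tscale (1 / \<epsilon>) s t) in
      foldr (\<lambda>k acc. \<Gamma>s (xks X T s (k - 1)) (Tkse T \<epsilon> s (k - 1)) (Tkse T \<epsilon> s k)
                       o\<^sub>L D \<epsilon> (xks X T s (k - 1)) (xks X T s k) o\<^sub>L acc)
            [1..<Suc n]
            (\<Gamma>s (xpath X T (tscale (1 / \<epsilon>) s t)) (Tkse T \<epsilon> s n) t))"

end

theory Submission
  imports Defs
begin
lemma set_integral_point:
  fixes \<phi> :: "real \<Rightarrow> 'y::{banach,second_countable_topology}"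
  shows "(LINT u:{a..a}|lborel. \<phi> u) = 0"
proof -
  show ?thesis
    unfolding set_lebesgue_integral_def
    by (rule integral_eq_zero_AE) (use AE_lborel_singleton[of a] in \<open>auto elim!: eventually_mono\<close>)
qed

lemma set_integral_split_Icc:
  fixes \<phi> :: "real \<Rightarrow> 'y::{banach,second_countable_topology}"
  assumes "a \<le> p" "p \<le> q" "set_integrable lborel {a..q} \<phi>"
  shows "(LINT u:{a..q}|lborel. \<phi> u) = (LINT u:{a..p}|lborel. \<phi> u) + (LINT u:{p..q}|lborel. \<phi> u)"
proof -
  have "{a..q} = {a..p} \<union> {p..q}" using assms by auto
  moreover have "(LINT u:{a..p} \<union> {p..q}|lborel. \<phi> u) = (LINT u:{a..p}|lborel. \<phi> u) + (LINT u:{p..q}|lborel. \<phi> u)"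
    apply (rule set_integral_Un_AE)
    using AE_lborel_singleton[of p] apply (auto elim!: eventually_mono)[1]
    using assms by (auto intro: set_integrable_subset)
  ultimately show ?thesis by simp
qed

lemma set_integral_const_bound:
  fixes \<phi> :: "real \<Rightarrow> 'y::{banach,second_countable_topology}"
  assumes "p \<le> q" "set_integrable lborel {p..q} \<phi>" "\<And>u. u \<in> {p..q} \<Longrightarrow> norm (\<phi> u - c) \<le> e"
  shows "norm ((LINT u:{p..q}|lborel. \<phi> u) - (q - p) *\<^sub>R c) \<le> e * (q - p)"
proof -
  have ci: "set_integrable lborel {p..q} (\<lambda>_. c)"
    unfolding set_integrable_def by (rule borel_integrable_compact) auto
  have ce: "(LINT u:{p..q}|lborel. c) = (q - p) *\<^sub>R c"
    using assms by (subst set_integral_const) auto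
  have "(LINT u:{p..q}|lborel. \<phi> u) - (q - p) *\<^sub>R c = (LINT u:{p..q}|lborel. \<phi> u - c)"
    using set_integral_diff(2)[OF assms(2) ci] ce by simp
  also have "norm \<dots> \<le> (LINT u:{p..q}|lborel. norm (\<phi> u - c))"
    by (rule set_integral_norm_bound) (use assms ci in auto)
  also have "\<dots> \<le> (LINT u:{p..q}|lborel. e)"
    apply (rule set_integral_mono)
    using set_integrable_norm[OF set_integral_diff(1)[OF assms(2) ci]] apply simp
    subgoal unfolding set_integrable_def by (rule borel_integrable_compact) auto
    using assms by auto
  also have "\<dots> = e * (q - p)"
    using assms by (subst set_integral_const) auto
  finally show ?thesis .
qed

lemma ftc_bochner:
  fixes F \<phi> :: "real \<Rightarrow> 'y::{banach,second_countable_topology}"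
  assumes ab: "a \<le> b"
    and der: "\<And>v. v \<in> {a..b} \<Longrightarrow> (F has_vector_derivative \<phi> v) (at v within {a..b})"
    and cont: "continuous_on {a..b} \<phi>"
  shows "set_integrable lborel {a..b} \<phi>" "(LINT u:{a..b}|lborel. \<phi> u) = F b - F a"
proof -
  show int: "set_integrable lborel {a..b} \<phi>"
    unfolding set_integrable_def by (rule borel_integrable_compact) (use cont in auto)
  define G where "G v = (LINT u:{a..v}|lborel. \<phi> u)" for v
  have split: "G q - G p = (LINT u:{p..q}|lborel. \<phi> u)" if "a \<le> p" "p \<le> q" "q \<le> b" for p q
    using set_integral_split_Icc[OF that(1,2), of \<phi>] set_integrable_subset[OF int, of "{a..q}"] that
    by (auto simp: G_def intro: set_integrable_subset)
  have intpq: "set_integrable lborel {p..q} \<phi>" if "a \<le> p" "q \<le> b" for p q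
    using int that by (auto intro: set_integrable_subset)
  have derG: "(G has_vector_derivative \<phi> v) (at v within {a..b})" if v: "v \<in> {a..b}" for v
    unfolding has_vector_derivative_def has_derivative_within_alt
  proof (intro conjI allI impI bounded_linear_scaleR_left)
    fix e :: real assume e: "e > 0"
    obtain d where d: "d > 0" "\<And>u. u \<in> {a..b} \<Longrightarrow> dist u v < d \<Longrightarrow> dist (\<phi> u) (\<phi> v) < e"
      using cont v e unfolding continuous_on_iff by metis
    show "\<exists>d>0. \<forall>y\<in>{a..b}. norm (y - v) < d \<longrightarrow> norm (G y - G v - (y - v) *\<^sub>R \<phi> v) \<le> e * norm (y - v)"
    proof (intro exI[of _ d] conjI ballI impI d(1))
      fix y assume y: "y \<in> {a..b}" "norm (y - v) < d"
      have bnd: "norm (\<phi> u - \<phi> v) \<le> e" if "u \<in> {min y v..max y v}" for u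
      proof -
        have "u \<in> {a..b}" "dist u v < d" using that y v by (auto simp: dist_real_def)
        from d(2)[OF this] show ?thesis by (simp add: dist_norm)
      qed
      show "norm (G y - G v - (y - v) *\<^sub>R \<phi> v) \<le> e * norm (y - v)"
      proof (cases "v \<le> y")
        case True
        have "norm (G y - G v - (y - v) *\<^sub>R \<phi> v) = norm ((LINT u:{v..y}|lborel. \<phi> u) - (y - v) *\<^sub>R \<phi> v)"
          using split[of v y] True y v by simp
        also have "\<dots> \<le> e * (y - v)"
          by (rule set_integral_const_bound) (use True intpq[of v y] y v bnd in auto)
        finally show ?thesis using True by simp
      next
        case False
        have "norm (G y - G v - (y - v) *\<^sub>R \<phi> v) = norm ((LINT u:{y..v}|lborel. \<phi> u) - (v - y) *\<^sub>R \<phi> v)"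
          using split[of y v] False y v by (simp add: norm_minus_commute algebra_simps)
        also have "\<dots> \<le> e * (v - y)"
          by (rule set_integral_const_bound) (use False intpq[of y v] y v bnd in auto)
        finally show ?thesis using False by simp
      qed
    qed
  qed
  have "\<exists>c. \<forall>x\<in>{a..b}. (\<lambda>v. F v - G v) x = c"
  proof (rule has_derivative_zero_constant)
    fix x assume x: "x \<in> {a..b}"
    have "((\<lambda>v. F v - G v) has_vector_derivative (\<phi> x - \<phi> x)) (at x within {a..b})"
      by (intro has_vector_derivative_diff der derG x)
    then show "((\<lambda>v. F v - G v) has_derivative (\<lambda>h. 0)) (at x within {a..b})"
      by (simp add: has_vector_derivative_def)
  qed simp
  then obtain c where "\<forall>x\<in>{a..b}. F x - G x = c" by blast
  then have "F b - G b = F a - G a" using ab by auto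
  moreover have "G a = 0" unfolding G_def by (rule set_integral_point)
  ultimately show "(LINT u:{a..b}|lborel. \<phi> u) = F b - F a"
    by (simp add: G_def algebra_simps)
qed

lemma time_set_nonneg: "time_set J \<Longrightarrow> s \<in> J \<Longrightarrow> 0 \<le> s"
  unfolding time_set_def by auto

lemma time_set_between: "time_set J \<Longrightarrow> s \<in> J \<Longrightarrow> t \<in> J \<Longrightarrow> s \<le> u \<Longrightarrow> u \<le> t \<Longrightarrow> u \<in> J"
  unfolding time_set_def by auto

lemma nontriv_within: "d > 0 \<Longrightarrow> {0<..<d} \<subseteq> S \<Longrightarrow> \<not> trivial_limit (at (0::real) within S)"
  unfolding trivial_limit_within using islimpt_subset islimpt_greaterThanLessThan1 by blast

lemma gen_unique:
  assumes J: "time_set J" and v: "v \<in> J"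
    and g1: "gen_lim J \<Gamma> v f g1" and g2: "gen_lim J \<Gamma> v f g2"
  shows "g1 = g2"
proof -
  have v0: "0 \<le> v" using time_set_nonneg[OF J v] .
  from J consider "J = {0..}" | Tinf where "Tinf > 0" "J = {0..Tinf}" unfolding time_set_def by auto
  then show ?thesis
  proof cases
    case 1
    have "\<not> trivial_limit (at 0 within {h. 0 < h \<and> v + h \<in> J})"
      by (rule nontriv_within[of 1]) (use 1 v0 in auto)
    then show ?thesis using g1 g2 unfolding gen_lim_def using tendsto_unique by blast
  next
    case 2
    show ?thesis
    proof (cases "v < Tinf")
      case True
      have "\<not> trivial_limit (at 0 within {h. 0 < h \<and> v + h \<in> J})"
        by (rule nontriv_within[of "Tinf - v"]) (use 2 v0 True in auto)
      then show ?thesis using g1 g2 unfolding gen_lim_def using tendsto_unique by blast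
    next
      case False
      then have "v = Tinf" using 2 v by auto
      have "\<not> trivial_limit (at 0 within {h. 0 < h \<and> v - h \<in> J})"
        by (rule nontriv_within[of "Tinf"]) (use 2 \<open>v = Tinf\<close> in auto)
      then show ?thesis using g1 g2 unfolding gen_lim_def using tendsto_unique by blast
    qed
  qed
qed

lemma gen_lim_gen:
  assumes J: "time_set J" and v: "v \<in> J" and f: "f \<in> gen_dom J \<Gamma> v"
  shows "gen_lim J \<Gamma> v f (gen J \<Gamma> v f)"
proof -
  obtain g where g: "gen_lim J \<Gamma> v f g" using f unfolding gen_dom_def by auto
  show ?thesis unfolding gen_def
    by (rule theI[of _ g]) (use g gen_unique[OF J v] in auto)
qed

context
  fixes J :: "real set" and \<iota> :: "'z::real_normed_vector \<Rightarrow>\<^sub>L 'y::{banach,second_countable_topology}"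
    and \<Gamma> :: "real \<Rightarrow> real \<Rightarrow> ('y \<Rightarrow>\<^sub>L 'y)"
  assumes J: "time_set J" and sg: "inh_semigroup J \<Gamma>" and reg: "regular J \<iota> \<Gamma>"
    and bnd: "\<And>r u. r \<in> J \<Longrightarrow> u \<in> J \<Longrightarrow> r \<le> u \<Longrightarrow> norm (\<Gamma> r u) \<le> 1"
    and acont: "\<And>h. continuous_on J (\<lambda>u. gen J \<Gamma> u (\<iota> h))"
begin

lemma sg_comp: "s \<in> J \<Longrightarrow> r \<in> J \<Longrightarrow> t \<in> J \<Longrightarrow> s \<le> r \<Longrightarrow> r \<le> t \<Longrightarrow> \<Gamma> s t y = \<Gamma> s r (\<Gamma> r t y)"
  using sg unfolding inh_semigroup_def by (metis blinfun_apply_blinfun_compose)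

lemma sg_id: "t \<in> J \<Longrightarrow> \<Gamma> t t y = y"
  using sg unfolding inh_semigroup_def by simp

lemma norm_apply_le: "r \<in> J \<Longrightarrow> u \<in> J \<Longrightarrow> r \<le> u \<Longrightarrow> norm (\<Gamma> r u y) \<le> norm y"
  using norm_blinfun[of "\<Gamma> r u" y] bnd[of r u] by (smt (verit) mult_right_mono mult_left_le_one_le norm_ge_zero)

lemma Gcont: "r \<in> J \<Longrightarrow> continuous_on {u\<in>J. r \<le> u} (\<lambda>u. \<Gamma> r u y)"
  using reg unfolding regular_def by auto

lemma gen_lim_iota:
  assumes v: "v \<in> J" shows "gen_lim J \<Gamma> v (\<iota> g) (gen J \<Gamma> v (\<iota> g))"
proof -
  have "range \<iota> \<subseteq> gen_dom_all J \<Gamma>" using reg unfolding regular_def by blast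
  then have "\<iota> g \<in> gen_dom J \<Gamma> v" using v unfolding gen_dom_all_def by blast
  then show ?thesis by (rule gen_lim_gen[OF J v])
qed

lemma deriv_G:
  assumes r: "r \<in> J" and b: "b \<in> J" and v: "v \<in> {r..b}"
  shows "((\<lambda>u. \<Gamma> r u (\<iota> g)) has_vector_derivative \<Gamma> r v (gen J \<Gamma> v (\<iota> g))) (at v within {r..b})"
proof -
  let ?f = "\<iota> g"
  define A where "A = gen J \<Gamma> v ?f"
  have vJ: "v \<in> J" using time_set_between[OF J r b] v by auto
  have inJ: "y \<in> J" if "y \<in> {r..b}" for y using time_set_between[OF J r b] that by auto
  have GL: "gen_lim J \<Gamma> v ?f A" unfolding A_def by (rule gen_lim_iota[OF vJ])
  have R: "((\<lambda>h. (1 / h) *\<^sub>R (\<Gamma> v (v + h) ?f - ?f)) \<longlongrightarrow> A) (at 0 within {h. 0 < h \<and> v + h \<in> J})"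
   and L: "((\<lambda>h. (1 / h) *\<^sub>R (\<Gamma> (v - h) v ?f - ?f)) \<longlongrightarrow> A) (at 0 within {h. 0 < h \<and> v - h \<in> J})"
    using GL unfolding gen_lim_def by auto
  have C: "continuous_on {u\<in>J. r \<le> u} (\<lambda>u. \<Gamma> r u A)" by (rule Gcont[OF r])
  show ?thesis
    unfolding has_vector_derivative_def has_derivative_within_alt A_def[symmetric]
  proof (intro conjI allI impI bounded_linear_scaleR_left)
    fix e :: real assume e: "e > 0"
    have e2: "e / 2 > 0" using e by simp
    obtain d1 where d1: "d1 > 0" "\<And>h. 0 < h \<Longrightarrow> v + h \<in> J \<Longrightarrow> h < d1 \<Longrightarrow>
        dist ((1 / h) *\<^sub>R (\<Gamma> v (v + h) ?f - ?f)) A < e"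
      using R[unfolded tendsto_iff, rule_format, OF e] unfolding eventually_at by (auto simp: dist_real_def)
    obtain d2 where d2: "d2 > 0" "\<And>h. 0 < h \<Longrightarrow> v - h \<in> J \<Longrightarrow> h < d2 \<Longrightarrow>
        dist ((1 / h) *\<^sub>R (\<Gamma> (v - h) v ?f - ?f)) A < e / 2"
      using L[unfolded tendsto_iff, rule_format, OF e2] unfolding eventually_at by (auto simp: dist_real_def)
    obtain d3 where d3: "d3 > 0" "\<And>y. y \<in> J \<Longrightarrow> r \<le> y \<Longrightarrow> dist y v < d3 \<Longrightarrow>
        dist (\<Gamma> r y A) (\<Gamma> r v A) < e / 2"
      using C[unfolded continuous_on_iff, rule_format, of v "e/2"] vJ v e2 by auto
    show "\<exists>d>0. \<forall>y\<in>{r..b}. norm (y - v) < d \<longrightarrow>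
        norm (\<Gamma> r y ?f - \<Gamma> r v ?f - (y - v) *\<^sub>R \<Gamma> r v A) \<le> e * norm (y - v)"
    proof (intro exI[of _ "min d1 (min d2 d3)"] conjI ballI impI)
      show "0 < min d1 (min d2 d3)" using d1 d2 d3 by simp
      fix y assume y: "y \<in> {r..b}" "norm (y - v) < min d1 (min d2 d3)"
      have yJ: "y \<in> J" using inJ[OF y(1)] .
      consider "y = v" | "v < y" | "y < v" by linarith
      then show "norm (\<Gamma> r y ?f - \<Gamma> r v ?f - (y - v) *\<^sub>R \<Gamma> r v A) \<le> e * norm (y - v)"
      proof cases
        case 1 then show ?thesis by simp
      next
        case 2
        define h where "h = y - v"
        have h: "0 < h" "v + h \<in> J" "h < d1" using 2 y yJ by (auto simp: h_def)
        have eq: "\<Gamma> r y ?f - \<Gamma> r v ?f - (y - v) *\<^sub>R \<Gamma> r v A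
              = \<Gamma> r v (h *\<^sub>R ((1 / h) *\<^sub>R (\<Gamma> v (v + h) ?f - ?f) - A))"
          using sg_comp[of r v y ?f] r vJ yJ v 2 h(1)
          by (simp add: h_def blinfun.diff_right blinfun.scaleR_right scaleR_diff_right)
        have "norm (\<Gamma> r y ?f - \<Gamma> r v ?f - (y - v) *\<^sub>R \<Gamma> r v A)
              \<le> norm (h *\<^sub>R ((1 / h) *\<^sub>R (\<Gamma> v (v + h) ?f - ?f) - A))"
          unfolding eq by (rule norm_apply_le) (use r vJ v in auto)
        also have "\<dots> = h * dist ((1 / h) *\<^sub>R (\<Gamma> v (v + h) ?f - ?f)) A"
          using h by (simp add: dist_norm)
        also have "\<dots> \<le> h * e" using d1(2)[OF h] h(1) by simp
        finally show ?thesis using 2 by (simp add: h_def mult.commute)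
      next
        case 3
        define h where "h = v - y"
        have h: "0 < h" "v - h \<in> J" "h < d2" using 3 y yJ by (auto simp: h_def)
        have eq: "\<Gamma> r y ?f - \<Gamma> r v ?f - (y - v) *\<^sub>R \<Gamma> r v A
              = - \<Gamma> r y (h *\<^sub>R ((1 / h) *\<^sub>R (\<Gamma> (v - h) v ?f - ?f) - A))
                - h *\<^sub>R (\<Gamma> r y A - \<Gamma> r v A)"
        proof -
          have hh: "h *\<^sub>R ((1 / h) *\<^sub>R (\<Gamma> (v - h) v ?f - ?f) - A) = \<Gamma> y v ?f - ?f - h *\<^sub>R A"
            using h(1) by (simp add: scaleR_diff_right h_def)
          have sc: "\<Gamma> r v ?f = \<Gamma> r y (\<Gamma> y v ?f)" using sg_comp[of r y v ?f] r vJ yJ y 3 by simp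
          show ?thesis unfolding hh sc
            by (simp only: blinfun.diff_right blinfun.scaleR_right) (simp add: h_def algebra_simps)
        qed
        have "norm (\<Gamma> r y ?f - \<Gamma> r v ?f - (y - v) *\<^sub>R \<Gamma> r v A)
              \<le> norm (\<Gamma> r y (h *\<^sub>R ((1 / h) *\<^sub>R (\<Gamma> (v - h) v ?f - ?f) - A)))
                + norm (h *\<^sub>R (\<Gamma> r y A - \<Gamma> r v A))"
          unfolding eq by (rule order_trans[OF norm_triangle_ineq4]) simp
        also have "\<dots> \<le> norm (h *\<^sub>R ((1 / h) *\<^sub>R (\<Gamma> (v - h) v ?f - ?f) - A))
                + norm (h *\<^sub>R (\<Gamma> r y A - \<Gamma> r v A))"
          by (intro add_mono[OF norm_apply_le order_refl]) (use r yJ y in auto)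
        also have "\<dots> = h * dist ((1 / h) *\<^sub>R (\<Gamma> (v - h) v ?f - ?f)) A + h * dist (\<Gamma> r y A) (\<Gamma> r v A)"
          using h by (simp add: dist_norm)
        also have "\<dots> \<le> h * (e / 2) + h * (e / 2)"
          using d2(2)[OF h] d3(2)[of y] yJ y h(1) 3
          by (intro add_mono mult_left_mono) (auto simp: dist_real_def)
        finally show ?thesis using 3 by (simp add: h_def)
      qed
    qed
  qed
qed

lemma cont_phi:
  assumes r: "r \<in> J" and b: "b \<in> J"
  shows "continuous_on {r..b} (\<lambda>u. \<Gamma> r u (gen J \<Gamma> u (\<iota> g)))"
proof -
  let ?a = "\<lambda>u. gen J \<Gamma> u (\<iota> g)"
  have inJ: "y \<in> J" if "y \<in> {r..b}" for y using time_set_between[OF J r b] that by auto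
  show ?thesis unfolding continuous_on_iff
  proof (intro ballI allI impI)
    fix w e :: real assume w: "w \<in> {r..b}" and e: "e > 0"
    have e2: "e / 2 > 0" using e by simp
    obtain d1 where d1: "d1 > 0" "\<And>y. y \<in> J \<Longrightarrow> dist y w < d1 \<Longrightarrow> dist (?a y) (?a w) < e / 2"
      using acont[of g, unfolded continuous_on_iff, rule_format, of w "e/2"] inJ[OF w] e2 by auto
    obtain d2 where d2: "d2 > 0" "\<And>y. y \<in> J \<Longrightarrow> r \<le> y \<Longrightarrow> dist y w < d2 \<Longrightarrow>
        dist (\<Gamma> r y (?a w)) (\<Gamma> r w (?a w)) < e / 2"
      using Gcont[OF r, of "?a w", unfolded continuous_on_iff, rule_format, of w "e/2"] inJ[OF w] w e2 by auto
    show "\<exists>d>0. \<forall>y\<in>{r..b}. dist y w < d \<longrightarrow> dist (\<Gamma> r y (?a y)) (\<Gamma> r w (?a w)) < e"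
    proof (intro exI[of _ "min d1 d2"] conjI ballI impI)
      show "0 < min d1 d2" using d1 d2 by simp
      fix y assume y: "y \<in> {r..b}" "dist y w < min d1 d2"
      have "dist (\<Gamma> r y (?a y)) (\<Gamma> r w (?a w))
            \<le> norm (\<Gamma> r y (?a y - ?a w)) + dist (\<Gamma> r y (?a w)) (\<Gamma> r w (?a w))"
        by (simp add: dist_norm blinfun.diff_right norm_triangle_ineq4 order_trans[OF _ norm_triangle_ineq] )
      also have "\<dots> \<le> dist (?a y) (?a w) + dist (\<Gamma> r y (?a w)) (\<Gamma> r w (?a w))"
        using norm_apply_le[of r y "?a y - ?a w"] r inJ[OF y(1)] y by (auto simp: dist_norm)
      also have "\<dots> < e / 2 + e / 2"
        using d1(2)[of y] d2(2)[of y] inJ[OF y(1)] y by (intro add_strict_mono) auto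
      finally show "dist (\<Gamma> r y (?a y)) (\<Gamma> r w (?a w)) < e" by simp
    qed
  qed
qed

lemma ftc_G:
  assumes r: "r \<in> J" and b: "b \<in> J" and rb: "r \<le> b"
  shows "set_integrable lborel {r..b} (\<lambda>u. \<Gamma> r u (gen J \<Gamma> u (\<iota> g)))"
    "(LINT u:{r..b}|lborel. \<Gamma> r u (gen J \<Gamma> u (\<iota> g))) = \<Gamma> r b (\<iota> g) - \<iota> g"
proof -
  note F = ftc_bochner[OF rb deriv_G[OF r b] cont_phi[OF r b], of g]
  show "set_integrable lborel {r..b} (\<lambda>u. \<Gamma> r u (gen J \<Gamma> u (\<iota> g)))" using F(1) .
  show "(LINT u:{r..b}|lborel. \<Gamma> r u (gen J \<Gamma> u (\<iota> g))) = \<Gamma> r b (\<iota> g) - \<iota> g"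
    using F(2) sg_id[OF r] by simp
qed

end

context
  fixes T :: "nat \<Rightarrow> real"
  assumes T0: "T 0 = 0" and Tinc: "\<And>n. T n < T (Suc n)" and Tunb: "\<And>r. \<exists>n. r < T n"
begin

lemma T_smono: "strict_mono T"
  using Tinc by (simp add: strict_mono_Suc_iff)

lemma T_less_iff: "T m < T n \<longleftrightarrow> m < n"
  using T_smono by (simp add: strict_mono_less)

lemma T_le_iff: "T m \<le> T n \<longleftrightarrow> m \<le> n"
  using T_smono by (simp add: strict_mono_less_eq)

lemma cnt_props:
  assumes "0 \<le> t"
  shows "T (cnt T t) \<le> t" "t < T (Suc (cnt T t))"
proof -
  obtain m where m: "t < T m" using Tunb by blast
  have bd: "\<And>y. T y \<le> t \<Longrightarrow> y \<le> m"
  proof -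
    fix y assume "T y \<le> t"
    then have "T y < T m" using m by simp
    then show "y \<le> m" using T_less_iff by simp
  qed
  have P0: "T 0 \<le> t" using T0 assms by simp
  show "T (cnt T t) \<le> t" unfolding cnt_def by (rule GreatestI_nat[where P="\<lambda>n. T n \<le> t", OF P0 bd])
  show "t < T (Suc (cnt T t))"
  proof (rule ccontr)
    assume "\<not> t < T (Suc (cnt T t))"
    then have "Suc (cnt T t) \<le> cnt T t" unfolding cnt_def
      by (intro Greatest_le_nat[where P="\<lambda>n. T n \<le> t", OF _ bd]) simp
    then show False by simp
  qed
qed

lemma cnt_eq:
  assumes "T n \<le> t" "t < T (Suc n)"
  shows "cnt T t = n"
  unfolding cnt_def
proof (rule Greatest_equality)
  show "T n \<le> t" by fact
  fix y assume "T y \<le> t"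
  then have "T y < T (Suc n)" using assms by simp
  then show "y \<le> n" using T_less_iff by simp
qed

lemma cnt_T: "cnt T (T n) = n"
  by (rule cnt_eq) (auto simp: Tinc)

context
  fixes s \<epsilon> :: real
  assumes s0: "0 \<le> s" and eps: "0 < \<epsilon>"
begin

definition "c0 = cnt T s"

lemma c0_props: "T c0 \<le> s" "s < T (Suc c0)"
  using cnt_props[OF s0] by (auto simp: c0_def)

lemma Tks_eq: "Tks T s k = (if k = 0 then s else T (c0 + k))"
  by (simp add: Tks_def c0_def)

lemma Tks_mono: "Tks T s k < Tks T s (Suc k)"
  using c0_props Tinc by (auto simp: Tks_eq)

lemma T_le_Tks: "T (c0 + k) \<le> Tks T s k"
  using c0_props by (auto simp: Tks_eq)

lemma Tks_Suc: "Tks T s (Suc k) = T (Suc (c0 + k))"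
  by (simp add: Tks_eq)

lemma tau0: "Tkse T \<epsilon> s 0 = s"
  by (simp add: Tkse_def Tks_def)

lemma tau_mono: "Tkse T \<epsilon> s k < Tkse T \<epsilon> s (Suc k)"
  using Tks_mono[of k] eps by (simp add: Tkse_def)

lemma tau_mono_le: "k \<le> m \<Longrightarrow> Tkse T \<epsilon> s k \<le> Tkse T \<epsilon> s m"
  by (induction m rule: dec_induct) (auto intro: order_trans less_imp_le tau_mono)

lemma tau_ge_s: "s \<le> Tkse T \<epsilon> s k"
  using tau_mono_le[of 0 k] by (simp add: tau0)

lemma tau_iff: "Tkse T \<epsilon> s k \<le> u \<longleftrightarrow> Tks T s k \<le> tscale (1 / \<epsilon>) s u"
  using eps by (simp add: Tkse_def tscale_def field_simps)

lemma tau_less_iff: "u < Tkse T \<epsilon> s k \<longleftrightarrow> tscale (1 / \<epsilon>) s u < Tks T s k"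
  using eps by (simp add: Tkse_def tscale_def field_simps)

lemma xks_eq: "xks X T s k = X (c0 + k)"
proof (cases "k = 0")
  case True then show ?thesis by (simp add: xks_def xpath_def Tks_def c0_def)
next
  case False then show ?thesis by (simp add: xks_def xpath_def Tks_eq cnt_T)
qed

lemma piece_eq:
  assumes "Tkse T \<epsilon> s k \<le> u" "u < Tkse T \<epsilon> s (Suc k)"
  shows "Ns T s (tscale (1 / \<epsilon>) s u) = k" "xpath X T (tscale (1 / \<epsilon>) s u) = xks X T s k"
proof -
  have c: "cnt T (tscale (1 / \<epsilon>) s u) = c0 + k"
    apply (rule cnt_eq)
    using assms T_le_Tks[of k] Tks_Suc[of k] by (auto simp: tau_iff tau_less_iff)
  show "Ns T s (tscale (1 / \<epsilon>) s u) = k" using c by (simp add: Ns_def c0_def)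
  show "xpath X T (tscale (1 / \<epsilon>) s u) = xks X T s k" using c by (simp add: xpath_def xks_eq)
qed

lemma piece_of:
  assumes "s \<le> u"
  defines "k \<equiv> Ns T s (tscale (1 / \<epsilon>) s u)"
  shows "Tkse T \<epsilon> s k \<le> u" "u < Tkse T \<epsilon> s (Suc k)"
proof -
  let ?u = "tscale (1 / \<epsilon>) s u"
  have su: "s \<le> ?u" using assms eps by (simp add: tscale_def)
  have cp: "T (cnt T ?u) \<le> ?u" "?u < T (Suc (cnt T ?u))" using cnt_props[of ?u] su s0 by auto
  have "c0 \<le> cnt T ?u"
  proof (rule ccontr)
    assume "\<not> c0 \<le> cnt T ?u"
    then have "Suc (cnt T ?u) \<le> c0" by simp
    then have "T (Suc (cnt T ?u)) \<le> T c0" using T_le_iff by blast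
    then show False using cp c0_props su by simp
  qed
  then have ck: "cnt T ?u = c0 + k" by (simp add: k_def Ns_def c0_def)
  show "Tkse T \<epsilon> s k \<le> u" unfolding tau_iff
    using cp ck su by (auto simp: Tks_eq)
  show "u < Tkse T \<epsilon> s (Suc k)" unfolding tau_less_iff
    using cp ck by (simp add: Tks_Suc)
qed

end
end

lemma compL_assoc: "(a o\<^sub>L b) o\<^sub>L c = a o\<^sub>L (b o\<^sub>L c)"
  by (rule blinfun_eqI) simp

lemma compL_id [simp]: "a o\<^sub>L id_blinfun = a" "id_blinfun o\<^sub>L a = a"
  by (rule blinfun_eqI, simp)+

lemma foldr_comp_id:
  "foldr (\<lambda>k acc. F k o\<^sub>L acc) xs B = foldr (\<lambda>k acc. F k o\<^sub>L acc) xs id_blinfun o\<^sub>L B"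
  by (induction xs) (auto simp: compL_assoc)

lemma sum_shift1: "(\<Sum>k\<in>{1..N}. g k) = (\<Sum>k<N. g (Suc k) :: 'a::comm_monoid_add)"
  by (induction N) (auto simp: atLeastAtMostSuc_conv add.commute)

context
  fixes J :: "real set"
    and \<iota> :: "'z::{banach,second_countable_topology} \<Rightarrow>\<^sub>L 'y::{banach,second_countable_topology}"
    and \<Gamma>s :: "'x \<Rightarrow> real \<Rightarrow> real \<Rightarrow> ('y \<Rightarrow>\<^sub>L 'y)"
    and D :: "real \<Rightarrow> 'x \<Rightarrow> 'x \<Rightarrow> ('y \<Rightarrow>\<^sub>L 'y)"
    and X :: "nat \<Rightarrow> 'x" and T :: "nat \<Rightarrow> real" and \<epsilon> s t :: real and g :: 'z
  assumes J: "time_set J"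
    and sg: "\<And>x. inh_semigroup J (\<Gamma>s x)"
    and reg: "\<And>x. regular J \<iota> (\<Gamma>s x)"
    and bnd: "\<And>x r u. r \<in> J \<Longrightarrow> u \<in> J \<Longrightarrow> r \<le> u \<Longrightarrow> norm (\<Gamma>s x r u) \<le> 1"
    and acont: "\<And>x h. continuous_on J (\<lambda>u. gen J (\<Gamma>s x) u (\<iota> h))"
    and T0: "T 0 = 0" and Tinc: "\<And>n. T n < T (Suc n)" and Tunb: "\<And>r. \<exists>n. r < T n"
    and sJ: "s \<in> J" and tJ: "t \<in> J" and st: "s \<le> t" and eps: "0 < \<epsilon>"
begin

lemma s0: "0 \<le> s" using time_set_nonneg[OF J sJ] .

abbreviation "\<tau> \<equiv> Tkse T \<epsilon> s"
abbreviation "xx \<equiv> xks X T s"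

definition "Fk j = \<Gamma>s (xx (j - 1)) (\<tau> (j - 1)) (\<tau> j) o\<^sub>L D \<epsilon> (xx (j - 1)) (xx j)"
definition "Pk n = foldr (\<lambda>k acc. Fk k o\<^sub>L acc) [1..<Suc n] id_blinfun"

lemma Pk0: "Pk 0 = id_blinfun" by (simp add: Pk_def)

lemma PkSuc: "Pk (Suc n) = Pk n o\<^sub>L Fk (Suc n)"
proof -
  have "[1..<Suc (Suc n)] = [1..<Suc n] @ [Suc n]" by simp
  then have "Pk (Suc n) = foldr (\<lambda>k acc. Fk k o\<^sub>L acc) [1..<Suc n] (Fk (Suc n) o\<^sub>L id_blinfun)"
    by (simp add: Pk_def)
  also have "\<dots> = Pk n o\<^sub>L Fk (Suc n)"
    by (subst foldr_comp_id) (simp add: Pk_def)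
  finally show ?thesis .
qed

lemmas piece_eq' = piece_eq[OF T0 Tinc Tunb s0 eps]
lemmas piece_of' = piece_of[OF T0 Tinc Tunb s0 eps]
lemmas tau_mono' = tau_mono[OF T0 Tinc Tunb s0 eps]
lemmas tau_mono_le' = tau_mono_le[OF T0 Tinc Tunb s0 eps]
lemmas tau_ge_s' = tau_ge_s[OF T0 Tinc Tunb s0 eps]
lemmas tau0' = tau0[OF T0 Tinc Tunb s0 eps]

lemma Vop_piece:
  assumes "\<tau> k \<le> u" "u < \<tau> (Suc k)"
  shows "Vop \<Gamma>s D X T \<epsilon> s u = Pk k o\<^sub>L \<Gamma>s (xx k) (\<tau> k) u"
proof -
  note pe = piece_eq'[OF assms]
  have "Vop \<Gamma>s D X T \<epsilon> s u = foldr (\<lambda>k acc. Fk k o\<^sub>L acc) [1..<Suc k] (\<Gamma>s (xx k) (\<tau> k) u)"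
    unfolding Vop_def Let_def pe Fk_def by simp
  also have "\<dots> = Pk k o\<^sub>L \<Gamma>s (xx k) (\<tau> k) u"
    by (subst foldr_comp_id) (simp add: Pk_def)
  finally show ?thesis .
qed

lemma inJ: "s \<le> u \<Longrightarrow> u \<le> t \<Longrightarrow> u \<in> J"
  using time_set_between[OF J sJ tJ] by auto

definition "hh u = Vop \<Gamma>s D X T \<epsilon> s u (gen J (\<Gamma>s (xpath X T (tscale (1 / \<epsilon>) s u))) u (\<iota> g))"

lemma piece_int:
  assumes kb: "\<tau> k \<le> b" "b \<le> \<tau> (Suc k)" "b \<le> t"
  shows "set_integrable lborel {\<tau> k..b} hh"
    "(LINT u:{\<tau> k..b}|lborel. hh u) = Pk k (\<Gamma>s (xx k) (\<tau> k) b (\<iota> g) - \<iota> g)"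
proof -
  let ?r = "\<tau> k"
  have rJ: "?r \<in> J" using inJ[of ?r] tau_ge_s'[of k] kb by auto
  have bJ: "b \<in> J" using inJ[of b] tau_ge_s'[of k] kb by auto
  have F1: "set_integrable lborel {?r..b} (\<lambda>u. \<Gamma>s (xx k) ?r u (gen J (\<Gamma>s (xx k)) u (\<iota> g)))"
    by (rule ftc_G(1)[where \<Gamma>="\<Gamma>s (xx k)"]) (use J sg reg bnd acont rJ bJ kb in auto)
  have F2: "(LINT u:{?r..b}|lborel. \<Gamma>s (xx k) ?r u (gen J (\<Gamma>s (xx k)) u (\<iota> g))) = \<Gamma>s (xx k) ?r b (\<iota> g) - \<iota> g"
    by (rule ftc_G(2)[where \<Gamma>="\<Gamma>s (xx k)"]) (use J sg reg bnd acont rJ bJ kb in auto)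
  define \<psi> where "\<psi> u = Pk k (\<Gamma>s (xx k) ?r u (gen J (\<Gamma>s (xx k)) u (\<iota> g)))" for u
  have eqpt: "indicator {?r..b} u *\<^sub>R hh u = indicator {?r..b} u *\<^sub>R \<psi> u + indicator {b..b} u *\<^sub>R (hh b - \<psi> b)" for u
  proof (cases "?r \<le> u \<and> u < b")
    case True
    then have "u < \<tau> (Suc k)" using kb by auto
    then have "hh u = \<psi> u"
      using True Vop_piece[of k u] piece_eq'(2)[of k u X] by (simp add: hh_def \<psi>_def)
    then show ?thesis using True by (auto simp: indicator_def)
  next
    case False
    then show ?thesis using kb by (auto simp: indicator_def)
  qed
  have ipsi: "integrable lborel (\<lambda>u. indicator {?r..b} u *\<^sub>R \<psi> u)"
  proof -
    have "integrable lborel (\<lambda>u. Pk k (indicator {?r..b} u *\<^sub>R \<Gamma>s (xx k) ?r u (gen J (\<Gamma>s (xx k)) u (\<iota> g))))"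
      using F1 unfolding set_integrable_def
      by (rule integrable_bounded_linear[where T="blinfun_apply (Pk k)", rotated]) (rule blinfun.bounded_linear_right)
    then show ?thesis by (simp add: \<psi>_def blinfun.scaleR_right)
  qed
  have Ipsi: "integral\<^sup>L lborel (\<lambda>u. indicator {?r..b} u *\<^sub>R \<psi> u) = Pk k (\<Gamma>s (xx k) ?r b (\<iota> g) - \<iota> g)"
  proof -
    have "integral\<^sup>L lborel (\<lambda>u. Pk k (indicator {?r..b} u *\<^sub>R \<Gamma>s (xx k) ?r u (gen J (\<Gamma>s (xx k)) u (\<iota> g))))
        = Pk k (integral\<^sup>L lborel (\<lambda>u. indicator {?r..b} u *\<^sub>R \<Gamma>s (xx k) ?r u (gen J (\<Gamma>s (xx k)) u (\<iota> g))))"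
      using F1 unfolding set_integrable_def
      by (rule integral_bounded_linear[where T="blinfun_apply (Pk k)", rotated]) (rule blinfun.bounded_linear_right)
    then show ?thesis using F2 by (simp add: \<psi>_def blinfun.scaleR_right set_lebesgue_integral_def)
  qed
  have ic: "integrable lborel (\<lambda>u. indicator {b..b} u *\<^sub>R (hh b - \<psi> b))"
    by (rule borel_integrable_compact) auto
  have Ic: "integral\<^sup>L lborel (\<lambda>u. indicator {b..b} u *\<^sub>R (hh b - \<psi> b)) = 0"
    using set_integral_const[of "{b..b}" lborel "hh b - \<psi> b"] by (simp add: set_lebesgue_integral_def)
  show "set_integrable lborel {?r..b} hh"
    unfolding set_integrable_def eqpt using ipsi ic by simp
  show "(LINT u:{?r..b}|lborel. hh u) = Pk k (\<Gamma>s (xx k) ?r b (\<iota> g) - \<iota> g)"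
    unfolding set_lebesgue_integral_def eqpt using ipsi ic Ipsi Ic by simp
qed

definition "NN = Ns T s (tscale (1 / \<epsilon>) s t)"

lemma tN: "\<tau> NN \<le> t" "t < \<tau> (Suc NN)"
  using piece_of'[OF st] by (auto simp: NN_def)

lemma acc_int:
  assumes "m \<le> NN"
  shows "set_integrable lborel {s..\<tau> m} hh \<and>
    (LINT u:{s..\<tau> m}|lborel. hh u) = (\<Sum>k<m. Pk k (\<Gamma>s (xx k) (\<tau> k) (\<tau> (Suc k)) (\<iota> g) - \<iota> g))"
  using assms
proof (induction m)
  case 0
  have "\<tau> 0 \<le> s" "s \<le> \<tau> (Suc 0)" "s \<le> t"
    using tau0' tau_ge_s'[of "Suc 0"] st by auto
  from piece_int(1)[OF this] have "set_integrable lborel {s..s} hh" by (simp add: tau0')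
  then show ?case using set_integral_point[of s hh] by (simp add: tau0')
next
  case (Suc m)
  then have IH: "set_integrable lborel {s..\<tau> m} hh"
    "(LINT u:{s..\<tau> m}|lborel. hh u) = (\<Sum>k<m. Pk k (\<Gamma>s (xx k) (\<tau> k) (\<tau> (Suc k)) (\<iota> g) - \<iota> g))"
    by auto
  have le: "\<tau> m \<le> \<tau> (Suc m)" "\<tau> (Suc m) \<le> \<tau> (Suc m)" "\<tau> (Suc m) \<le> t"
    using tau_mono'[of m] tau_mono_le'[OF Suc.prems] tN by auto
  note P = piece_int[OF le]
  have int: "set_integrable lborel {s..\<tau> (Suc m)} hh"
  proof -
    have "{s..\<tau> (Suc m)} = {s..\<tau> m} \<union> {\<tau> m..\<tau> (Suc m)}"
      using tau_ge_s'[of m] le by auto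
    then show ?thesis using set_integrable_Un[OF IH(1) P(1)] by simp
  qed
  have "(LINT u:{s..\<tau> (Suc m)}|lborel. hh u) = (LINT u:{s..\<tau> m}|lborel. hh u) + (LINT u:{\<tau> m..\<tau> (Suc m)}|lborel. hh u)"
    by (rule set_integral_split_Icc[OF tau_ge_s'[of m] le(1) int])
  then show ?case using int IH(2) P(2) by simp
qed

lemma full_int:
  "(LINT u:{s..t}|lborel. hh u) = (\<Sum>k<NN. Pk k (\<Gamma>s (xx k) (\<tau> k) (\<tau> (Suc k)) (\<iota> g) - \<iota> g))
      + Pk NN (\<Gamma>s (xx NN) (\<tau> NN) t (\<iota> g) - \<iota> g)"
proof -
  note A = acc_int[OF order_refl]
  have le: "\<tau> NN \<le> t" "t \<le> \<tau> (Suc NN)" "t \<le> t" using tN by auto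
  note P = piece_int[OF le]
  have int: "set_integrable lborel {s..t} hh"
  proof -
    have "{s..t} = {s..\<tau> NN} \<union> {\<tau> NN..t}" using tau_ge_s'[of NN] le by auto
    then show ?thesis using set_integrable_Un[OF conjunct1[OF A] P(1)] by simp
  qed
  have "(LINT u:{s..t}|lborel. hh u) = (LINT u:{s..\<tau> NN}|lborel. hh u) + (LINT u:{\<tau> NN..t}|lborel. hh u)"
    by (rule set_integral_split_Icc[OF tau_ge_s'[of NN] le(1) int])
  then show ?thesis using A P(2) by simp
qed

lemma lim_piece:
  assumes j: "\<tau> (Suc j) \<le> t"
  shows "Lim (at_left (\<tau> (Suc j))) (\<lambda>u. Vop \<Gamma>s D X T \<epsilon> s u y) = Pk j (\<Gamma>s (xx j) (\<tau> j) (\<tau> (Suc j)) y)"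
proof -
  let ?r = "\<tau> j" and ?b = "\<tau> (Suc j)"
  have rb: "?r < ?b" by (rule tau_mono')
  have rJ: "?r \<in> J" using inJ[of ?r] tau_ge_s'[of j] rb j by auto
  have bJ: "?b \<in> J" using inJ[of ?b] tau_ge_s'[of "Suc j"] j by auto
  have C: "continuous_on {u\<in>J. ?r \<le> u} (\<lambda>u. \<Gamma>s (xx j) ?r u y)"
    using reg[of "xx j"] rJ unfolding regular_def by auto
  have "((\<lambda>u. \<Gamma>s (xx j) ?r u y) \<longlongrightarrow> \<Gamma>s (xx j) ?r ?b y) (at ?b within {u\<in>J. ?r \<le> u})"
    using C bJ rb unfolding continuous_on_def by auto
  then have "((\<lambda>u. \<Gamma>s (xx j) ?r u y) \<longlongrightarrow> \<Gamma>s (xx j) ?r ?b y) (at ?b within {?r..?b})"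
    by (rule tendsto_within_subset) (use time_set_between[OF J rJ bJ] in auto)
  then have "((\<lambda>u. \<Gamma>s (xx j) ?r u y) \<longlongrightarrow> \<Gamma>s (xx j) ?r ?b y) (at_left ?b)"
    using at_within_Icc_at_left[OF rb] by simp
  then have L: "((\<lambda>u. Pk j (\<Gamma>s (xx j) ?r u y)) \<longlongrightarrow> Pk j (\<Gamma>s (xx j) ?r ?b y)) (at_left ?b)"
    by (rule bounded_linear.tendsto[OF blinfun.bounded_linear_right])
  have ev: "eventually (\<lambda>u. Pk j (\<Gamma>s (xx j) ?r u y) = Vop \<Gamma>s D X T \<epsilon> s u y) (at_left ?b)"
    using eventually_at_left_real[OF rb]
    by (rule eventually_mono) (auto simp: Vop_piece[of j])
  have "((\<lambda>u. Vop \<Gamma>s D X T \<epsilon> s u y) \<longlongrightarrow> Pk j (\<Gamma>s (xx j) ?r ?b y)) (at_left ?b)"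
    using tendsto_cong[OF ev] L by simp
  then show ?thesis by (intro tendsto_Lim) auto
qed

lemma path_identity:
  "Vop \<Gamma>s D X T \<epsilon> s t (\<iota> g) = \<iota> g + (LINT u:{s..t}|lborel. hh u)
     + (\<Sum>k\<in>{1..NN}. Lim (at_left (\<tau> k)) (\<lambda>u. Vop \<Gamma>s D X T \<epsilon> s u (D \<epsilon> (xx (k - 1)) (xx k) (\<iota> g) - \<iota> g)))"
proof -
  let ?f = "\<iota> g"
  have lim: "(\<Sum>k\<in>{1..NN}. Lim (at_left (\<tau> k)) (\<lambda>u. Vop \<Gamma>s D X T \<epsilon> s u (D \<epsilon> (xx (k - 1)) (xx k) ?f - ?f)))
     = (\<Sum>k<NN. Pk k (\<Gamma>s (xx k) (\<tau> k) (\<tau> (Suc k)) (D \<epsilon> (xx k) (xx (Suc k)) ?f - ?f)))"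
    unfolding sum_shift1
  proof (rule sum.cong[OF refl])
    fix k assume "k \<in> {..<NN}"
    then have "\<tau> (Suc k) \<le> t" using tau_mono_le'[of "Suc k" NN] tN by auto
    then show "Lim (at_left (\<tau> (Suc k))) (\<lambda>u. Vop \<Gamma>s D X T \<epsilon> s u (D \<epsilon> (xx (Suc k - 1)) (xx (Suc k)) ?f - ?f))
        = Pk k (\<Gamma>s (xx k) (\<tau> k) (\<tau> (Suc k)) (D \<epsilon> (xx k) (xx (Suc k)) ?f - ?f))"
      using lim_piece by simp
  qed
  have step: "Pk k (\<Gamma>s (xx k) (\<tau> k) (\<tau> (Suc k)) ?f - ?f) + Pk k (\<Gamma>s (xx k) (\<tau> k) (\<tau> (Suc k)) (D \<epsilon> (xx k) (xx (Suc k)) ?f - ?f))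
      = Pk (Suc k) ?f - Pk k ?f" for k
    by (simp add: PkSuc Fk_def blinfun.diff_right)
  have tel: "(\<Sum>k<NN. Pk k (\<Gamma>s (xx k) (\<tau> k) (\<tau> (Suc k)) ?f - ?f)) + (\<Sum>k<NN. Pk k (\<Gamma>s (xx k) (\<tau> k) (\<tau> (Suc k)) (D \<epsilon> (xx k) (xx (Suc k)) ?f - ?f)))
      = Pk NN ?f - ?f"
    unfolding sum.distrib[symmetric] step using sum_lessThan_telescope[of "\<lambda>k. Pk k ?f" NN] by (simp add: Pk0)
  have V: "Vop \<Gamma>s D X T \<epsilon> s t ?f = Pk NN (\<Gamma>s (xx NN) (\<tau> NN) t ?f)"
    using Vop_piece[OF tN] by simp
  show ?thesis
    unfolding full_int lim V using tel by (simp add: blinfun.diff_right algebra_simps)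
qed

lemma path_identity':
  "Vop \<Gamma>s D X T \<epsilon> s t (\<iota> g) = \<iota> g
     + (LINT u:{s..t}|lborel. Vop \<Gamma>s D X T \<epsilon> s u (gen J (\<Gamma>s (xpath X T (tscale (1 / \<epsilon>) s u))) u (\<iota> g)))
     + (\<Sum>k\<in>{1..Ns T s (tscale (1 / \<epsilon>) s t)}. Lim (at_left (Tkse T \<epsilon> s k))
          (\<lambda>u. Vop \<Gamma>s D X T \<epsilon> s u (D \<epsilon> (xks X T s (k - 1)) (xks X T s k) (\<iota> g) - \<iota> g)))"
  using path_identity unfolding hh_def[abs_def] NN_def .

end


theorem lemma4p10:
  fixes J :: "real set"
    and \<iota> :: "'z::{banach,second_countable_topology} \<Rightarrow>\<^sub>L 'y::{banach,second_countable_topology}"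
    and M :: "'a measure"
    and xs :: "nat \<Rightarrow> 'a \<Rightarrow> 'x::finite"
    and Ts :: "nat \<Rightarrow> 'a \<Rightarrow> real"
    and Q :: "'x \<Rightarrow> 'x \<Rightarrow> real measure"
    and \<Gamma>s :: "'x \<Rightarrow> real \<Rightarrow> real \<Rightarrow> ('y \<Rightarrow>\<^sub>L 'y)"
    and D :: "real \<Rightarrow> 'x \<Rightarrow> 'x \<Rightarrow> ('y \<Rightarrow>\<^sub>L 'y)"
    and s t :: real
    and g :: 'z
  assumes J: "time_set J"
    and emb_inj: "inj \<iota>"
    and complete: "complete_measure M"
    and MRP: "markov_renewal M xs Ts Q"
    and semigroup: "\<And>x. inh_semigroup J (\<Gamma>s x)"
    and meas: "\<And>x. (\<lambda>(r, u, f). \<Gamma>s x r u f) \<in> borel_measurable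
                      (restrict_space borel {(r, u, f). r \<in> J \<and> u \<in> J \<and> r \<le> u})"
    and D0: "\<And>x y. D 0 x y = id_blinfun"
    \<comment> \<open>(A0)\<close>
    and A0a: "range \<iota> \<subseteq> D1_dom D"
    and A0b: "\<And>x. regular J \<iota> (\<Gamma>s x)"
    and A0c: "\<And>x h. continuous_on J (\<lambda>u. gen J (\<Gamma>s x) u (\<iota> h))"
    and A0d: "\<exists>\<tau>>0. \<forall>x y. measure (Q x y) {\<tau><..} = 0"
    and A0e: "\<And>x r u. r \<in> J \<Longrightarrow> u \<in> J \<Longrightarrow> r \<le> u \<Longrightarrow> norm (\<Gamma>s x r u) \<le> 1"
             "\<And>\<epsilon> x y. \<epsilon> \<in> {0..1} \<Longrightarrow> norm (D \<epsilon> x y) \<le> 1"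
    and A0f: "\<And>x u. u \<in> J \<Longrightarrow> bounded_linear (\<lambda>h. gen J (\<Gamma>s x) u (\<iota> h))"
             "\<And>x. \<exists>C. \<forall>u\<in>J. onorm (\<lambda>h. gen J (\<Gamma>s x) u (\<iota> h)) \<le> C"
    and A0g: "\<And>f. f \<in> (\<Inter>x. Ader_dom J \<iota> \<Gamma>s x) \<Longrightarrow>
                 (\<exists>C. \<forall>u\<in>J. \<forall>x. norm (\<iota> (Ader J \<iota> \<Gamma>s x u f)) \<le> C) \<and>
                 (\<exists>C. \<forall>u\<in>J. \<forall>x. norm (inv \<iota> (gen J (\<Gamma>s x) u f)) \<le> C)"
    and A0h: "\<And>f. f \<in> D1_dom D \<Longrightarrow> \<exists>C. \<forall>\<epsilon>\<in>{0..1}. \<forall>x y. norm (D1 D \<epsilon> x y f) \<le> C"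
    and A0i: "\<And>f. f \<in> D2_dom D \<Longrightarrow> \<exists>C. \<forall>\<epsilon>\<in>{0..1}. \<forall>x y. norm (D2 D \<epsilon> x y f) \<le> C"
    \<comment> \<open>(s,t) in Delta_J, f = iota g in Y1\<close>
    and st: "s \<in> J" "t \<in> J" "s \<le> t"
  shows "\<forall>\<omega>\<in>space M. (\<forall>r. \<exists>n. r < Ts n \<omega>) \<longrightarrow>
    (let X = (\<lambda>n. xs n \<omega>); T = (\<lambda>n. Ts n \<omega>); f = \<iota> g;
         V = (\<lambda>\<epsilon> u. Vop \<Gamma>s D X T \<epsilon> s u) in
     \<forall>\<epsilon>\<in>{0<..1}.
       V \<epsilon> t f =
         f + (LINT u:{s..t}|lborel. V \<epsilon> u (gen J (\<Gamma>s (xpath X T (tscale (1 / \<epsilon>) s u))) u f))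
           + (\<Sum>k\<in>{1..Ns T s (tscale (1 / \<epsilon>) s t)}.
                Lim (at_left (Tkse T \<epsilon> s k)) (\<lambda>u. V \<epsilon> u (D \<epsilon> (xks X T s (k - 1)) (xks X T s k) f - f))))"
proof (intro ballI impI)
  fix \<omega> assume \<omega>: "\<omega> \<in> space M" and unb: "\<forall>r. \<exists>n. r < Ts n \<omega>"
  have T0: "(\<lambda>n. Ts n \<omega>) 0 = 0" and Tinc: "\<And>n. (\<lambda>n. Ts n \<omega>) n < (\<lambda>n. Ts n \<omega>) (Suc n)"
    using MRP \<omega> unfolding markov_renewal_def by auto
  have Tunb: "\<And>r. \<exists>n. r < (\<lambda>n. Ts n \<omega>) n" using unb by auto
  show "let X = (\<lambda>n. xs n \<omega>); T = (\<lambda>n. Ts n \<omega>); f = \<iota> g;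
         V = (\<lambda>\<epsilon> u. Vop \<Gamma>s D X T \<epsilon> s u) in
     \<forall>\<epsilon>\<in>{0<..1}.
       V \<epsilon> t f =
         f + (LINT u:{s..t}|lborel. V \<epsilon> u (gen J (\<Gamma>s (xpath X T (tscale (1 / \<epsilon>) s u))) u f))
           + (\<Sum>k\<in>{1..Ns T s (tscale (1 / \<epsilon>) s t)}.
                Lim (at_left (Tkse T \<epsilon> s k)) (\<lambda>u. V \<epsilon> u (D \<epsilon> (xks X T s (k - 1)) (xks X T s k) f - f)))"
    unfolding Let_def
  proof (intro ballI)
    fix \<epsilon> :: real assume "\<epsilon> \<in> {0<..1}"
    then have eps: "0 < \<epsilon>" by simp
    note PI = path_identity'[where J=J and \<iota>=\<iota> and \<Gamma>s=\<Gamma>s and D=D and g=g and X="\<lambda>n. xs n \<omega>", OF J semigroup A0b A0e(1) A0c T0 Tinc Tunb st eps]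
    show "Vop \<Gamma>s D (\<lambda>n. xs n \<omega>) (\<lambda>n. Ts n \<omega>) \<epsilon> s t (\<iota> g) =
         \<iota> g + (LINT u:{s..t}|lborel. Vop \<Gamma>s D (\<lambda>n. xs n \<omega>) (\<lambda>n. Ts n \<omega>) \<epsilon> s u
           (gen J (\<Gamma>s (xpath (\<lambda>n. xs n \<omega>) (\<lambda>n. Ts n \<omega>) (tscale (1 / \<epsilon>) s u))) u (\<iota> g)))
           + (\<Sum>k\<in>{1..Ns (\<lambda>n. Ts n \<omega>) s (tscale (1 / \<epsilon>) s t)}.
                Lim (at_left (Tkse (\<lambda>n. Ts n \<omega>) \<epsilon> s k)) (\<lambda>u. Vop \<Gamma>s D (\<lambda>n. xs n \<omega>) (\<lambda>n. Ts n \<omega>) \<epsilon> s u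
                  (D \<epsilon> (xks (\<lambda>n. xs n \<omega>) (\<lambda>n. Ts n \<omega>) s (k - 1)) (xks (\<lambda>n. xs n \<omega>) (\<lambda>n. Ts n \<omega>) s k) (\<iota> g) - \<iota> g)))"
      using PI by simp
  qed
qed

end
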